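(* Let $\mathcal{X}\subset\mathbb{R}^d$, $\mathcal{Y}=\{1,\dots,c\}$, and let $D$ be a distribution on $\mathcal{X}\times\mathcal{Y}$ that is $k$-separable with $\delta$-margin (for some $\delta>0$), witnessed by a unit vector $a\in\mathbb{R}^d$, constants $b_1<b_2<\cdots<b_{k+1}$ and labels $y_1,\dots,y_k\in\mathcal{Y}$ as in the definition below. Let $f:\mathcal{Y}\to\mathbb{R}^m$ be injective, and regard $f(y)$ as the desired output for an input $x$ with label $y$. Define $W\in\mathbb{R}^{k\times m}$ to be the matrix whose first row is $f(y_1)^T$ and whose $i$-th row, for $2\le i\le k$, is $f(y_i)^T-f(y_{i-1})^T$; write $W=[w_1\;w_2\;\cdots\;w_m]$ with columns $w_j\in\mathbb{R}^k$, and assume $\max_j\|w_j\|_2>0$. Fix $\epsilon>0$ and set $$c_s=\frac{1}{\delta}\log\!\left(\frac{\sqrt{k}\,\max_{1\le j\le m}\|w_j\|_2}{\epsilon}\right).$$ Define the 2-layer network $g:\mathcal{X}\to\mathbb{R}^m$ by $$g(x)=W^T\big(\rho(c_s a^Tx-c_sb_1),\ \rho(c_s a^Tx-c_sb_2),\ \dots,\ \rho(c_s a^Tx-c_sb_k)\big)^T .$$ Then $$\mathbb{P}_{(x,y)\sim D}\Big(\max_{1\le j\le m}|g_j(x)-f_j(y)|>\epsilon\Big)=0,$$ where $g_j,f_j$ denote $j$-th components. This network is specified by $d+(m+1)k$ real parameters (the $d$ entries of $c_sa$, the $k$ hidden biases $c_sb_1,\dots,c_sb_k$, and the $mk$ entries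 of $W$).
   Context: $\rho(t)=1/(1+e^{-t})$ is the sigmoid function. Definition ($k$-separable with $\delta$-margin): Let $\mathcal{X}\subset\mathbb{R}^d$ and $\mathcal{Y}=\{1,\dots,c\}$. A distribution $D$ over $\mathcal{X}\times\mathcal{Y}$ is $k$-separable with $\delta$-margin ($\delta>0$) if there exist a projection vector $a\in\mathbb{R}^d$ with $\|a\|_2=1$ and constants $b_1<b_2<\cdots<b_{k+1}$ such that, setting $\mathcal{X}_i=\{x\in\mathcal{X}: b_i+\delta<a^Tx<b_{i+1}-\delta\}$ for $i\in\{1,\dots,k\}$: (i) for each $i$ there is $y_i\in\mathcal{Y}$ with $\mathbb{P}_{(x,y)\sim D}(y=y_i\mid x\in\mathcal{X}_i)=1$; (ii) $\mathbb{P}_{(x,y)\sim D}\big(x\in\bigcup_{i=1}^k\mathcal{X}_i\big)=1$. The number $k$ of intervals may exceed the number $c$ of labels. *)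

theory Defs
  imports "HOL-Probability.Probability"
begin

definition sigmoid :: "real \<Rightarrow> real" where
  "sigmoid t = 1 / (1 + exp (- t))"

text \<open>The open slab X_i (as a subset of R^d; the intersection with the input
  domain X is irrelevant because D is concentrated on X times Y).\<close>
definition slab :: "real ^ 'd \<Rightarrow> (nat \<Rightarrow> real) \<Rightarrow> real \<Rightarrow> nat \<Rightarrow> (real ^ 'd) set" where
  "slab a b \<delta> i = {x. b i + \<delta> < a \<bullet> x \<and> a \<bullet> x < b (Suc i) - \<delta>}"

text \<open>P(A | B) = 1, written as P(A \<inter> B) = P(B) (i.e. P(A|B) P(B) = P(B)).\<close>
definition cond_prob_one :: "'a measure \<Rightarrow> 'a set \<Rightarrow> 'a set \<Rightarrow> bool" where
  "cond_prob_one M A B \<longleftrightarrow> measure M (A \<inter> B) = measure M B"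

definition k_separable_with ::
  "((real ^ 'd) \<times> nat) measure \<Rightarrow> nat \<Rightarrow> nat \<Rightarrow> real \<Rightarrow> real ^ 'd \<Rightarrow> (nat \<Rightarrow> real) \<Rightarrow> (nat \<Rightarrow> nat) \<Rightarrow> bool" where
  "k_separable_with D c k \<delta> a b ylab \<longleftrightarrow>
     \<delta> > 0 \<and> norm a = 1 \<and> (\<forall>i\<in>{1..k}. b i < b (Suc i)) \<and>
     (\<forall>i\<in>{1..k}. ylab i \<in> {1..c} \<and>
        cond_prob_one D {z \<in> space D. snd z = ylab i} {z \<in> space D. fst z \<in> slab a b \<delta> i}) \<and>
     measure D {z \<in> space D. fst z \<in> (\<Union>i\<in>{1..k}. slab a b \<delta> i)} = 1"

definition Wmat :: "(nat \<Rightarrow> real ^ 'm) \<Rightarrow> (nat \<Rightarrow> nat) \<Rightarrow> nat \<Rightarrow> 'm \<Rightarrow> real" where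
  "Wmat f ylab i j = (if i = 1 then f (ylab 1) $ j else f (ylab i) $ j - f (ylab (i - 1)) $ j)"

definition Wcol_norm :: "(nat \<Rightarrow> real ^ 'm) \<Rightarrow> (nat \<Rightarrow> nat) \<Rightarrow> nat \<Rightarrow> 'm \<Rightarrow> real" where
  "Wcol_norm f ylab k j = sqrt (\<Sum>i = 1..k. (Wmat f ylab i j)\<^sup>2)"

definition max_col_norm :: "(nat \<Rightarrow> real ^ 'm::finite) \<Rightarrow> (nat \<Rightarrow> nat) \<Rightarrow> nat \<Rightarrow> real" where
  "max_col_norm f ylab k = Max (range (Wcol_norm f ylab k))"

definition scale_cs :: "(nat \<Rightarrow> real ^ 'm::finite) \<Rightarrow> (nat \<Rightarrow> nat) \<Rightarrow> nat \<Rightarrow> real \<Rightarrow> real \<Rightarrow> real" where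
  "scale_cs f ylab k \<delta> \<epsilon> = (1 / \<delta>) * ln (sqrt (real k) * max_col_norm f ylab k / \<epsilon>)"

definition net :: "(nat \<Rightarrow> real ^ 'm::finite) \<Rightarrow> (nat \<Rightarrow> nat) \<Rightarrow> nat \<Rightarrow> real \<Rightarrow> real \<Rightarrow> real ^ 'd \<Rightarrow> (nat \<Rightarrow> real) \<Rightarrow> real ^ 'd \<Rightarrow> real ^ 'm" where
  "net f ylab k \<delta> \<epsilon> a b x = (\<chi> j. \<Sum>i = 1..k.
      Wmat f ylab i j * sigmoid (scale_cs f ylab k \<delta> \<epsilon> * (a \<bullet> x) - scale_cs f ylab k \<delta> \<epsilon> * b i))"

end

theory Submission
  imports Defs
begin

lemma sig_hi:
  assumes "t > \<delta>" "\<delta> > 0"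
  shows "\<bar>sigmoid (c*t) - 1\<bar> < exp (-(c*\<delta>))"
proof -
  have e: "sigmoid (c*t) - 1 = - (1/(1+exp(c*t)))"
  proof -
    have "1 + exp (c*t) \<noteq> 0" using exp_gt_zero[of "c*t"] by linarith
    then show ?thesis unfolding sigmoid_def exp_minus by (simp add: divide_simps) 
  qed
  have pos: "1/(1+exp(c*t)) > 0" by (simp add: add_pos_pos)
  have "1/(1+exp(c*t)) < exp (-(c*\<delta>))"
  proof (cases "c \<ge> 0")
    case True
    have "c*\<delta> \<le> c*t" using True assms by (simp add: mult_left_mono)
    hence "exp(c*\<delta>) \<le> exp(c*t)" by simp
    hence "exp(c*\<delta>) < 1 + exp(c*t)" by linarith
    moreover have "0 < (1 + exp (c * t)) * exp (c * \<delta>)"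
      by (intro mult_pos_pos add_pos_pos) simp_all
    ultimately have "1/(1+exp(c*t)) < 1/exp(c*\<delta>)"
      by (intro divide_strict_left_mono) auto
    thus ?thesis by (simp add: exp_minus field_simps)
  next
    case False
    have "1/(1+exp(c*t)) < 1" by (subst divide_less_eq_1_pos) (simp_all add: add_pos_pos)
    moreover have "1 < exp (-(c*\<delta>))" using False assms
      by (simp add: mult_neg_pos)
    ultimately show ?thesis by linarith
  qed
  thus ?thesis using e pos by simp
qed

lemma sig_lo:
  assumes "t < -\<delta>" "\<delta> > 0"
  shows "\<bar>sigmoid (c*t)\<bar> < exp (-(c*\<delta>))"
proof -
  have e: "sigmoid (c*t) = 1/(1+exp(-(c*t)))"
    unfolding sigmoid_def by simp
  have pos: "1/(1+exp(-(c*t))) > 0" by (simp add: add_pos_pos)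
  have "1/(1+exp(-(c*t))) < exp (-(c*\<delta>))"
  proof (cases "c \<ge> 0")
    case True
    have "c*\<delta> \<le> c*(-t)" using True assms by (intro mult_left_mono) simp_all
    hence "c*\<delta> \<le> -(c*t)" by simp
    hence "exp(c*\<delta>) \<le> exp(-(c*t))" by simp
    hence "exp(c*\<delta>) < 1 + exp(-(c*t))" by linarith
    moreover have "0 < (1 + exp (-(c * t))) * exp (c * \<delta>)"
      by (intro mult_pos_pos add_pos_pos) simp_all
    ultimately have "1/(1+exp(-(c*t))) < 1/exp(c*\<delta>)"
      by (intro divide_strict_left_mono) auto
    thus ?thesis by (simp add: exp_minus field_simps)
  next
    case False
    have "1/(1+exp(-(c*t))) < 1" by (subst divide_less_eq_1_pos) (simp_all add: add_pos_pos)
    moreover have "1 < exp (-(c*\<delta>))" using False assms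
      by (simp add: mult_neg_pos)
    ultimately show ?thesis by linarith
  qed
  thus ?thesis using e pos by simp
qed

lemma b_mono:
  assumes "\<forall>i\<in>{1..k}. b i < (b (Suc i)::real)" "1 \<le> l"
  shows "l \<le> i \<Longrightarrow> i \<le> Suc k \<Longrightarrow> b l \<le> b i"
proof (induction i)
  case 0 then show ?case by simp
next
  case (Suc n)
  show ?case
  proof (cases "l = Suc n")
    case False
    then have "l \<le> n" using Suc.prems by simp
    then have 1: "b l \<le> b n" using Suc by simp
    have "n \<in> {1..k}" using \<open>l \<le> n\<close> assms(2) Suc.prems by simp
    then have "b n < b (Suc n)" using assms(1) by blast
    then show ?thesis using 1 by simp
  qed simp
qed

lemma telesc:
  shows "1 \<le> i \<Longrightarrow> f (ylab i) $ j = (\<Sum>l=1..i. Wmat f ylab l j)"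
proof (induction i)
  case 0 then show ?case by simp
next
  case (Suc n) then show ?case
    by (cases n) (auto simp: Wmat_def)
qed

lemma pointwise:
  fixes f :: "nat \<Rightarrow> real ^ 'm::finite" and x a :: "real ^ 'd"
  assumes d: "\<delta> > 0" and bm: "\<forall>i\<in>{1..k}. b i < b(Suc i)" and i: "i \<in> {1..k}"
    and x: "x \<in> slab a b \<delta> i" and M: "max_col_norm f ylab k > 0" and ep: "\<epsilon> > 0"
  shows "\<bar>net f ylab k \<delta> \<epsilon> a b x $ j - f (ylab i) $ j\<bar> < \<epsilon>"
proof -
  define c where "c = scale_cs f ylab k \<delta> \<epsilon>"
  define s where "s = a \<bullet> x"
  define E where "E = exp (-(c*\<delta>))"
  define W where "W = (\<lambda>l. Wmat f ylab l j)"
  define Mx where "Mx = max_col_norm f ylab k"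
  define e where "e = (\<lambda>l. sigmoid (c*(s - b l)) - (if l \<le> i then 1 else 0))"
  have k1: "k \<ge> 1" using i by simp
  have sk: "sqrt (real k) > 0" using k1 by simp
  have Q: "sqrt (real k) * Mx / \<epsilon> > 0" using sk M ep Mx_def by simp
  have "c*\<delta> = ln (sqrt (real k) * Mx / \<epsilon>)"
    using d unfolding c_def scale_cs_def Mx_def by simp
  hence hE: "E = \<epsilon> / (sqrt (real k) * Mx)"
    unfolding E_def using Q by (simp add: exp_minus)
  have xs: "b i + \<delta> < s" "s < b (Suc i) - \<delta>" using x unfolding slab_def s_def by auto
  have habs: "\<bar>e l\<bar> < E" if l: "l \<in> {1..k}" for l
  proof (cases "l \<le> i")
    case True
    have "b l \<le> b i" using b_mono[OF bm, of l i] l True i by simp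
    hence "s - b l > \<delta>" using xs by simp
    then show ?thesis using sig_hi[OF _ d, of "s - b l" c] True unfolding e_def E_def by simp
  next
    case False
    have "b (Suc i) \<le> b l" using b_mono[OF bm, of "Suc i" l] l False by simp
    hence "s - b l < -\<delta>" using xs by simp
    then show ?thesis using sig_lo[OF _ d, of "s - b l" c] False unfolding e_def E_def by simp
  qed
  have netj: "net f ylab k \<delta> \<epsilon> a b x $ j = (\<Sum>l=1..k. W l * sigmoid (c*(s - b l)))"
    unfolding net_def W_def c_def s_def by (simp add: right_diff_distrib)
  have fi: "f (ylab i) $ j = (\<Sum>l=1..k. W l * (if l \<le> i then 1 else 0))"
  proof -
    have "(\<Sum>l=1..k. W l * (if l \<le> i then 1 else 0)) = (\<Sum>l=1..i. W l)"
      by (rule sum.mono_neutral_cong_right) (use i in auto)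
    then show ?thesis using telesc[of i f ylab j] i unfolding W_def by simp
  qed
  have diff: "net f ylab k \<delta> \<epsilon> a b x $ j - f (ylab i) $ j = (\<Sum>l=1..k. W l * e l)"
    unfolding netj fi e_def by (simp add: sum_subtractf[symmetric] right_diff_distrib)
  have tri: "\<bar>\<Sum>l=1..k. W l * e l\<bar> \<le> (\<Sum>l=1..k. \<bar>W l\<bar> * \<bar>e l\<bar>)"
  proof -
    have "\<bar>\<Sum>l=1..k. W l * e l\<bar> \<le> (\<Sum>l=1..k. \<bar>W l * e l\<bar>)" by (rule sum_abs)
    also have "\<dots> = (\<Sum>l=1..k. \<bar>W l\<bar> * \<bar>e l\<bar>)" by (simp only: abs_mult)
    finally show ?thesis .
  qed
  have L2W: "L2_set W {1..k} = Wcol_norm f ylab k j"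
    unfolding L2_set_def Wcol_norm_def W_def by simp
  have colM: "Wcol_norm f ylab k j \<le> Mx"
    unfolding Mx_def max_col_norm_def by (rule Max_ge[OF finite_imageI[OF finite_class.finite_UNIV] rangeI])
  have CS: "(\<Sum>l=1..k. \<bar>W l\<bar>) \<le> Wcol_norm f ylab k j * sqrt (real k)"
  proof -
    have "(\<Sum>l=1..k. \<bar>W l\<bar>) = (\<Sum>l=1..k. \<bar>W l\<bar> * \<bar>(\<lambda>_. 1::real) l\<bar>)" by simp
    also have "\<dots> \<le> L2_set W {1..k} * L2_set (\<lambda>_. 1::real) {1..k}" by (rule L2_set_mult_ineq)
    also have "L2_set (\<lambda>_. 1::real) {1..k} = sqrt (real k)"
      using L2_set_constant[of "1::real" "{1..k}"] by simp
    finally show ?thesis using L2W by simp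
  qed
  show ?thesis
  proof (cases "\<forall>l\<in>{1..k}. W l = 0")
    case True
    then show ?thesis using diff ep by simp
  next
    case False
    have "(\<Sum>l=1..k. \<bar>W l\<bar> * \<bar>e l\<bar>) < (\<Sum>l=1..k. \<bar>W l\<bar> * E)"
    proof (rule sum_strict_mono_ex1)
      show "\<forall>l\<in>{1..k}. \<bar>W l\<bar> * \<bar>e l\<bar> \<le> \<bar>W l\<bar> * E"
        using habs by (simp add: less_imp_le mult_left_mono)
      show "\<exists>l\<in>{1..k}. \<bar>W l\<bar> * \<bar>e l\<bar> < \<bar>W l\<bar> * E"
      proof -
        obtain l where l: "l \<in> {1..k}" "W l \<noteq> 0" using False by blast
        then have "\<bar>W l\<bar> * \<bar>e l\<bar> < \<bar>W l\<bar> * E" using habs[OF l(1)] by simp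
        then show ?thesis using l by blast
      qed
    qed simp
    also have "\<dots> = E * (\<Sum>l=1..k. \<bar>W l\<bar>)" by (simp add: sum_distrib_left mult.commute)
    also have "\<dots> \<le> E * (Mx * sqrt (real k))"
    proof (rule mult_left_mono)
      show "(\<Sum>l=1..k. \<bar>W l\<bar>) \<le> Mx * sqrt (real k)"
        using CS mult_right_mono[OF colM less_imp_le[OF sk]] by linarith
      show "0 \<le> E" unfolding E_def by simp
    qed
    also have "\<dots> = \<epsilon>"
    proof -
      have "Mx > 0" using M Mx_def by simp
      then have "sqrt (real k) * Mx \<noteq> 0" using sk by simp
      then show ?thesis unfolding hE by (simp add: field_simps)
    qed
    finally show ?thesis using diff tri by linarith
  qed
qed

theorem theorem1:
  fixes D :: "((real ^ 'd) \<times> nat) measure"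
    and X :: "(real ^ 'd) set"
    and c k :: nat and \<delta> \<epsilon> :: real
    and a :: "real ^ 'd" and b :: "nat \<Rightarrow> real" and ylab :: "nat \<Rightarrow> nat"
    and f :: "nat \<Rightarrow> real ^ 'm::finite"
  assumes "prob_space D"
    and "sets D = sets (borel \<Otimes>\<^sub>M count_space UNIV)"
    and "AE z in D. fst z \<in> X \<and> snd z \<in> {1..c}"
    and "k_separable_with D c k \<delta> a b ylab"
    and "inj_on f {1..c}"
    and "max_col_norm f ylab k > 0"
    and "\<epsilon> > 0"
  shows "measure D {z \<in> space D.
           Max (range (\<lambda>j. \<bar>net f ylab k \<delta> \<epsilon> a b (fst z) $ j - f (snd z) $ j\<bar>)) > \<epsilon>} = 0"
proof -
  interpret prob_space D by fact
  have d: "\<delta> > 0" and bm: "\<forall>i\<in>{1..k}. b i < b (Suc i)"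
    and lab: "\<And>i. i \<in> {1..k} \<Longrightarrow> cond_prob_one D {z \<in> space D. snd z = ylab i} {z \<in> space D. fst z \<in> slab a b \<delta> i}"
    and U1: "measure D {z \<in> space D. fst z \<in> (\<Union>i\<in>{1..k}. slab a b \<delta> i)} = 1"
    using assms(4) unfolding k_separable_with_def by auto
  define U where "U = {z \<in> space D. fst z \<in> (\<Union>i\<in>{1..k}. slab a b \<delta> i)}"
  define A where "A = (\<lambda>i. {z \<in> space D. snd z = ylab i})"
  define B where "B = (\<lambda>i. {z \<in> space D. fst z \<in> slab a b \<delta> i})"
  have fstm: "fst \<in> measurable D borel"
    unfolding measurable_cong_sets[OF assms(2) refl, of borel] by (rule measurable_fst)
  have sndm: "snd \<in> measurable D (count_space UNIV)"
    unfolding measurable_cong_sets[OF assms(2) refl, of "count_space UNIV"] by (rule measurable_snd)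
  have Usets: "U \<in> sets D"
  proof (rule ccontr)
    assume "U \<notin> sets D"
    then have "measure D U = 0" by (rule measure_notin_sets)
    then show False using U1 unfolding U_def by simp
  qed
  have Asets: "A i \<in> sets D" for i
  proof -
    have "A i = snd -` {ylab i} \<inter> space D" unfolding A_def by auto
    then show ?thesis using measurable_sets[OF sndm, of "{ylab i}"] by simp
  qed
  have Bsets: "B i \<in> sets D" for i
  proof -
    have "slab a b \<delta> i \<in> sets borel"
      unfolding slab_def by (intro borel_open open_Collect_conj open_Collect_less continuous_intros)
    moreover have "B i = fst -` slab a b \<delta> i \<inter> space D" unfolding B_def by auto
    ultimately show ?thesis using measurable_sets[OF fstm] by simp
  qed
  have null_of: "S \<in> null_sets D" if "S \<in> sets D" "measure D S = 0" for S
    using that by (simp add: emeasure_eq_measure null_setsI)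
  have N1: "space D - U \<in> null_sets D"
  proof (rule null_of)
    show "space D - U \<in> sets D" using Usets by auto
    show "measure D (space D - U) = 0" using prob_compl[OF Usets] U1 U_def by simp
  qed
  have N2: "B i - A i \<in> null_sets D" if "i \<in> {1..k}" for i
  proof (rule null_of)
    show "B i - A i \<in> sets D" using Asets Bsets by auto
    have "measure D (A i \<inter> B i) = measure D (B i)"
      using lab[OF that] unfolding cond_prob_one_def A_def B_def .
    then show "measure D (B i - A i) = 0"
      using finite_measure_Diff'[OF Bsets Asets] by (simp add: Int_commute)
  qed
  define N where "N = (space D - U) \<union> (\<Union>i\<in>{1..k}. B i - A i)"
  have Nnull: "N \<in> null_sets D"
  proof -
    have "(\<Union>i\<in>{1..k}. B i - A i) \<in> null_sets D"
      by (rule null_sets_UN') (use N2 in simp_all)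
    then show ?thesis unfolding N_def using N1 by (rule null_sets.Un[rotated])
  qed
  have sub: "{z \<in> space D.
           Max (range (\<lambda>j. \<bar>net f ylab k \<delta> \<epsilon> a b (fst z) $ j - f (snd z) $ j\<bar>)) > \<epsilon>} \<subseteq> N"
  proof
    fix z assume z: "z \<in> {z \<in> space D.
           Max (range (\<lambda>j. \<bar>net f ylab k \<delta> \<epsilon> a b (fst z) $ j - f (snd z) $ j\<bar>)) > \<epsilon>}"
    show "z \<in> N"
    proof (rule ccontr)
      assume "z \<notin> N"
      then have zU: "z \<in> U" and zBA: "\<And>i. i \<in> {1..k} \<Longrightarrow> z \<notin> B i - A i"
        using z unfolding N_def by auto
      then obtain i where i: "i \<in> {1..k}" and sl: "fst z \<in> slab a b \<delta> i" unfolding U_def by auto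
      then have "z \<in> B i" using z unfolding B_def by auto
      then have "z \<in> A i" using zBA[OF i] by auto
      then have y: "snd z = ylab i" unfolding A_def by auto
      have "\<forall>j. \<bar>net f ylab k \<delta> \<epsilon> a b (fst z) $ j - f (snd z) $ j\<bar> < \<epsilon>"
        using pointwise[OF d bm i sl assms(6) assms(7)] y by simp
      then have "Max (range (\<lambda>j. \<bar>net f ylab k \<delta> \<epsilon> a b (fst z) $ j - f (snd z) $ j\<bar>)) < \<epsilon>"
        by (subst Max_less_iff) auto
      moreover have "Max (range (\<lambda>j. \<bar>net f ylab k \<delta> \<epsilon> a b (fst z) $ j - f (snd z) $ j\<bar>)) > \<epsilon>"
        using z by (simp only: mem_Collect_eq)
      ultimately show False by linarith
    qed
  qed
  have "measure D {z \<in> space D.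
           Max (range (\<lambda>j. \<bar>net f ylab k \<delta> \<epsilon> a b (fst z) $ j - f (snd z) $ j\<bar>)) > \<epsilon>} \<le> measure D N"
    by (rule finite_measure_mono[OF sub]) (use Nnull in blast)
  also have "measure D N = 0" using null_setsD1[OF Nnull] by (simp add: measure_def)
  finally show ?thesis using measure_nonneg[of D] by (meson antisym)
qed

end
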